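(* Let $1\le q\le k$, $n\ge 2$, $f\in P_1^{k,q}$, $a\in E_k$ with $\gcd(a,k)=1$, $b_1,\dots,b_n\in E_k$, $g_i(x_i)=[a\,f(x_i)+b_i]\bmod k$ for $i=1,\dots,n$, and $h(x_1,\dots,x_n)=[g_1(x_1)+\dots+g_n(x_n)]\bmod k$. Let $1<t\le n$ with $\gcd(t,k)=1$. Then identifying any $t$ distinct variables of $h$ (substituting one common variable $z$ — new or one of them — for all of them) yields, as a function of $z$ and the remaining $n-t$ variables, an $H(q)$-function belonging to $P_{n-t+1}^k$.
   Context: $E_k=\{0,1,\dots,k-1\}$, $k\ge 2$, with arithmetic modulo $k$. $P_m^k$ is the set of all functions $E_k^m\to E_k$; $P_1^{k,q}$ is the set of functions $E_k\to E_k$ taking exactly $q$ distinct values. For a variable $x$ of a function $g$, $\mathrm{Spr}(x,g)$ is the set of numbers of distinct values of all one-variable functions obtained from $g$ by fixing all variables other than $x$ to constants (for a function of the single variable $x$, this is $\{$number of its distinct values$\}$). A function $g$ is an $H(q)$-function if $\mathrm{Spr}(x,g)=\{q\}$ for every variable $x$ of $g$. *)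

theory Defs
  imports Main
begin

text \<open>A function of m variables over E_k = {0..<k} is modelled as
  g :: (nat \<Rightarrow> nat) \<Rightarrow> nat, applied to an argument vector x whose
  components x 0, ..., x (m-1) are the variables (only these are read).\<close>

definition in_P :: "nat \<Rightarrow> nat \<Rightarrow> ((nat \<Rightarrow> nat) \<Rightarrow> nat) \<Rightarrow> bool" where
  "in_P k m g \<longleftrightarrow> (\<forall>x. (\<forall>j<m. x j < k) \<longrightarrow> g x < k)"

definition Spr :: "nat \<Rightarrow> nat \<Rightarrow> ((nat \<Rightarrow> nat) \<Rightarrow> nat) \<Rightarrow> nat \<Rightarrow> nat set" where
  "Spr k m g i = {card ((\<lambda>c. g (x(i := c))) ` {..<k}) | x. \<forall>j<m. x j < k}"

definition is_H :: "nat \<Rightarrow> nat \<Rightarrow> nat \<Rightarrow> ((nat \<Rightarrow> nat) \<Rightarrow> nat) \<Rightarrow> bool" where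
  "is_H k m q g \<longleftrightarrow> (\<forall>i<m. Spr k m g i = {q})"

text \<open>Identification of the variables with indices in S (subset of {0..<n}) of an
  n-ary function h: the result has variable 0 = the common variable z, and
  variable j+1 = the (j+1)-th smallest index of {0..<n} - S.\<close>
definition identify :: "nat \<Rightarrow> nat set \<Rightarrow> ((nat \<Rightarrow> nat) \<Rightarrow> nat) \<Rightarrow> (nat \<Rightarrow> nat) \<Rightarrow> nat" where
  "identify n S h y = h (\<lambda>i. if i \<in> S then y 0
       else y (Suc (card {j \<in> {0..<n} - S. j < i})))"

end

theory Submission
  imports Defs "HOL-Number_Theory.Cong"
begin

lemma inj_aff:
  fixes A C k u v :: nat
  assumes "coprime A k" "u < k" "v < k" "(A*u + C) mod k = (A*v + C) mod k"
  shows "u = v"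
proof -
  have "[A*u + C = A*v + C] (mod k)" using assms(4) by (simp add: cong_def)
  then have "[A*u = A*v] (mod k)" by (simp add: cong_add_rcancel_nat)
  then have "[u = v] (mod k)" using assms(1) by (simp add: cong_mult_lcancel_nat)
  then show ?thesis using assms(2,3) cong_less_imp_eq_nat by blast
qed

lemma card_aff:
  fixes A C k :: nat and f F
  assumes "coprime A k" "\<forall>x<k. f x < k" "\<forall>c. F c = (A * f c + C) mod k"
  shows "card (F ` {..<k}) = card (f ` {..<k})"
proof -
  have "F ` {..<k} = (\<lambda>c. (A * f c + C) mod k) ` {..<k}"
    using assms(3) by (intro image_cong) auto
  also have "\<dots> = (\<lambda>u. (A*u + C) mod k) ` (f ` {..<k})"
    by (simp only: image_image)
  finally have "F ` {..<k} = (\<lambda>u. (A*u + C) mod k) ` (f ` {..<k})" .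
  moreover have "inj_on (\<lambda>u. (A*u + C) mod k) (f ` {..<k})"
  proof (rule inj_onI)
    fix u v assume "u \<in> f ` {..<k}" "v \<in> f ` {..<k}" "(A*u + C) mod k = (A*v + C) mod k"
    then show "u = v" using inj_aff[OF assms(1)] assms(2) by auto
  qed
  ultimately show ?thesis by (simp add: card_image)
qed

lemma rank_bij:
  fixes R :: "nat set" and r
  assumes "finite R" "\<forall>i. r i = card {j\<in>R. j<i}"
  shows "r ` R = {..<card R}" "inj_on r R"
proof -
  show inj: "inj_on r R"
  proof (rule inj_onI)
    fix i i' assume ii: "i \<in> R" "i' \<in> R" "r i = r i'"
    have lt: "r i < r i'" if "i \<in> R" "i' \<in> R" "i < i'" for i i'
    proof -
      have "{j\<in>R. j<i} \<subset> {j\<in>R. j<i'}" using that by auto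
      moreover have "finite {j\<in>R. j<i'}" using assms(1) by simp
      ultimately show ?thesis by (simp add: assms(2) psubset_card_mono)
    qed
    show "i = i'"
    proof (rule ccontr)
      assume "i \<noteq> i'"
      then have "i < i' \<or> i' < i" by auto
      then show False using lt[of i i'] lt[of i' i] ii by auto
    qed
  qed
  have sub: "r ` R \<subseteq> {..<card R}"
  proof
    fix y assume "y \<in> r ` R"
    then obtain i where i: "i \<in> R" "y = r i" by auto
    have "{j\<in>R. j<i} \<subset> R" using i by auto
    then show "y \<in> {..<card R}" using i assms psubset_card_mono by auto
  qed
  have "card (r ` R) = card R" using inj by (simp add: card_image)
  then show "r ` R = {..<card R}" using sub by (simp add: card_subset_eq)
qed

theorem corollary2p9:
  fixes k q n t a :: nat and f :: "nat \<Rightarrow> nat" and b :: "nat \<Rightarrow> nat"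
    and g :: "nat \<Rightarrow> nat \<Rightarrow> nat" and h :: "(nat \<Rightarrow> nat) \<Rightarrow> nat"
    and S :: "nat set"
  assumes k: "k \<ge> 2" and q: "1 \<le> q" "q \<le> k" and n: "n \<ge> 2"
    and f_range: "\<forall>x<k. f x < k" and f_q: "card (f ` {..<k}) = q"
    and a: "a < k" "coprime a k"
    and b: "\<forall>i<n. b i < k"
    and g_def: "\<forall>i x. g i x = (a * f x + b i) mod k"
    and h_def: "\<forall>x. h x = (\<Sum>i<n. g i (x i)) mod k"
    and t: "1 < t" "t \<le> n" "coprime t k"
    and S: "S \<subseteq> {..<n}" "card S = t"
  shows "is_H k (n - t + 1) q (identify n S h) \<and> in_P k (n - t + 1) (identify n S h)"
proof -
  define R where "R = {0..<n} - S"
  define r where "r i = card {j\<in>R. j<i}" for i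
  define G where "G = identify n S h"
  have hx: "h X = (\<Sum>i<n. a * f (X i) + b i) mod k" for X
    by (simp add: h_def g_def mod_sum_eq)
  have idf: "G y = h (\<lambda>i. if i\<in>S then y 0 else y (Suc (r i)))" for y
    unfolding G_def identify_def R_def[symmetric] r_def[symmetric] by (rule refl)
  have finR: "finite R" by (simp add: R_def)
  have cardR: "card R = n - t"
    using S by (simp add: R_def card_Diff_subset lessThan_atLeast0 finite_subset)
  have rb: "r ` R = {..<n - t}" "inj_on r R"
    using rank_bij[OF finR, of r] r_def cardR by auto
  have finS: "finite S" using S finite_subset by blast
  have SR: "{..<n} = R \<union> S" "R \<inter> S = {}" using S by (auto simp: R_def)
  have key: "card ((\<lambda>c. G (x(i := c))) ` {..<k}) = q" if i: "i < n - t + 1" for x i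
  proof (cases i)
    case 0
    define C where "C = (\<Sum>i\<in>S. b i) + (\<Sum>j\<in>R. a * f (x (Suc (r j))) + b j)"
    have "G (x(i := c)) = ((t*a) * f c + C) mod k" for c
    proof -
      have e: "(\<lambda>j. if j\<in>S then (x(i:=c)) 0 else (x(i:=c)) (Suc (r j)))
             = (\<lambda>j. if j\<in>S then c else x (Suc (r j)))" using 0 by auto
      have "G (x(i := c)) = (\<Sum>j\<in>R \<union> S. a * f (if j\<in>S then c else x (Suc (r j))) + b j) mod k"
        unfolding idf e hx SR(1) by (rule refl)
      also have "(\<Sum>j\<in>R \<union> S. a * f (if j\<in>S then c else x (Suc (r j))) + b j)
         = (\<Sum>j\<in>R. a * f (if j\<in>S then c else x (Suc (r j))) + b j)
           + (\<Sum>j\<in>S. a * f (if j\<in>S then c else x (Suc (r j))) + b j)"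
        using finR finS SR(2) by (simp add: sum.union_disjoint)
      also have "(\<Sum>j\<in>R. a * f (if j\<in>S then c else x (Suc (r j))) + b j)
          = (\<Sum>j\<in>R. a * f (x (Suc (r j))) + b j)"
        by (rule sum.cong) (auto simp: R_def)
      also have "(\<Sum>j\<in>S. a * f (if j\<in>S then c else x (Suc (r j))) + b j)
          = (\<Sum>j\<in>S. a * f c + b j)"
        by (rule sum.cong) auto
      also have "\<dots> = t * (a * f c) + (\<Sum>j\<in>S. b j)"
        using S by (simp add: sum.distrib)
      also have "(\<Sum>j\<in>R. a * f (x (Suc (r j))) + b j) + (t * (a * f c) + (\<Sum>j\<in>S. b j))
          = (t*a) * f c + C" by (simp add: C_def algebra_simps)
      finally show ?thesis .
    qed
    then have eqc: "\<forall>c. G (x(i := c)) = ((t*a) * f c + C) mod k" by blast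
    have ta: "coprime (t*a) k" using a(2) t(3) by simp
    have "card ((\<lambda>c. G (x(i := c))) ` {..<k}) = card (f ` {..<k})"
      by (rule card_aff[of "t*a" k f "\<lambda>c. G (x(i := c))" C]) (fact ta, fact f_range, rule eqc)
    then show ?thesis using f_q by simp
  next
    case (Suc j)
    then have "j < n - t" using i by simp
    then have "j \<in> r ` R" using rb(1) by simp
    then obtain i0 where i0: "i0 \<in> R" "r i0 = j" by blast
    have uniq: "\<And>i'. i' \<in> R \<Longrightarrow> r i' = j \<Longrightarrow> i' = i0"
    proof -
      fix i' assume "i' \<in> R" "r i' = j"
      then show "i' = i0" using inj_onD[OF rb(2), of i' i0] i0 by simp
    qed
    define W where "W i' = (if i'\<in>S then x 0 else x (Suc (r i')))" for i'
    define C where "C = b i0 + (\<Sum>j\<in>{..<n} - {i0}. a * f (W j) + b j)"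
    have i0n: "i0 \<in> {..<n}" using i0 by (auto simp: R_def)
    have "G (x(i := c)) = (a * f c + C) mod k" for c
    proof -
      let ?X = "\<lambda>i'. if i'\<in>S then (x(i := c)) 0 else (x(i := c)) (Suc (r i'))"
      have s1: "G (x(i := c)) = (\<Sum>j\<in>{..<n}. a * f (?X j) + b j) mod k"
        unfolding idf hx by (rule refl)
      have s2: "(\<Sum>j\<in>{..<n}. a * f (?X j) + b j)
          = (a * f (?X i0) + b i0) + (\<Sum>j\<in>{..<n} - {i0}. a * f (?X j) + b j)"
        by (rule sum.remove[OF _ i0n]) simp
      have s3: "?X i0 = c" using i0 Suc by (simp add: R_def)
      have s4: "(\<Sum>j\<in>{..<n} - {i0}. a * f (?X j) + b j) = (\<Sum>j\<in>{..<n} - {i0}. a * f (W j) + b j)"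
      proof (rule sum.cong)
        fix j' assume j': "j' \<in> {..<n} - {i0}"
        have "?X j' = W j'"
        proof (cases "j' \<in> S")
          case False
          then have "j' \<in> R" using j' by (auto simp: R_def)
          then have "r j' \<noteq> j" using uniq j' by auto
          then show ?thesis using False Suc by (simp add: W_def)
        qed (simp add: W_def Suc)
        then show "a * f (?X j') + b j' = a * f (W j') + b j'" by simp
      qed simp
      show ?thesis unfolding s1 s2 s3 s4 C_def by (simp only: add.assoc)
    qed
    then have eqc: "\<forall>c. G (x(i := c)) = (a * f c + C) mod k" by blast
    have "card ((\<lambda>c. G (x(i := c))) ` {..<k}) = card (f ` {..<k})"
      by (rule card_aff[of a k f "\<lambda>c. G (x(i := c))" C]) (fact a(2), fact f_range, rule eqc)
    then show ?thesis using f_q by simp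
  qed
  have H: "is_H k (n - t + 1) q G"
    unfolding is_H_def Spr_def
  proof (intro allI impI)
    fix i assume i: "i < n - t + 1"
    have "\<exists>x. \<forall>j<n - t + 1. x j < k" using k by (intro exI[of _ "\<lambda>_. 0"]) auto
    then show "{card ((\<lambda>c. G (x(i := c))) ` {..<k}) | x. \<forall>j<n - t + 1. x j < k} = {q}"
      using key[OF i] by auto
  qed
  have P: "in_P k (n - t + 1) G"
    unfolding in_P_def using k by (simp add: idf hx)
  show ?thesis using H P by (simp add: G_def)
qed

end
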